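(* For all $i_1,\dots,i_n\in\mathbb{N}_0$, $$\sum_{j=1}^{n-1}\frac{1}{2^j}\,\mathtt{m}\big(x_j^{2^{j+1}i_j}\big)+\frac{1}{2^{n-1}}\,\mathtt{m}\big(x_n^{2^ni_n}\big)-\mathtt{m}_{i_1,\dots,i_n}^2\in\operatorname{qm}(\emptyset,\emptyset).$$
   Context: Let $\mathbb{R}[\underline x]=\mathbb{R}[x_1,\dots,x_n]$, $\mathscr{M}=\mathbb{R}[\mathtt{m}_{i_1,\dots,i_n}\colon (i_1,\dots,i_n)\in\mathbb{N}_0^n]$ the polynomial ring in countably many indeterminates with $\mathtt{m}_{0,\dots,0}:=1$, $\mathscr{M}[\underline x]=\mathscr{M}\otimes_{\mathbb{R}}\mathbb{R}[\underline x]$, and $\mathtt{m}:\mathscr{M}[\underline x]\to\mathscr{M}$ the unique $\mathscr{M}$-linear map with $\mathtt{m}(x_1^{i_1}\cdots x_n^{i_n})=\mathtt{m}_{i_1,\dots,i_n}$. $\operatorname{qm}(\emptyset,\emptyset)$ is the quadratic module of $\mathscr{M}$ generated by $\{\mathtt{m}(f^2)\colon f\in\mathscr{M}[\underline x]\}$ (smallest subset of $\mathscr{M}$ containing $1$ and these elements, closed under addition and under multiplication by squares of elements of $\mathscr{M}$). *)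

theory Defs
  imports Complex_Main "HOL-Library.Poly_Mapping"
begin

text \<open>Multi-indices (i_1,...,i_n) in N_0^n are represented as finitely supported
  maps nat \<Rightarrow>0 nat with keys in {..<n}; coordinate j (1-based) is index j-1.\<close>
type_synonym mindex = "nat \<Rightarrow>\<^sub>0 nat"

text \<open>The ring M: real polynomials in the indeterminates m_alpha (alpha a multi-index).\<close>
type_synonym Mring = "(mindex \<Rightarrow>\<^sub>0 nat) \<Rightarrow>\<^sub>0 real"

text \<open>M[x]: polynomials in x_1..x_n (x_j is index j-1) with coefficients in M.\<close>
type_synonym Mxring = "mindex \<Rightarrow>\<^sub>0 Mring"

definition constM :: "real \<Rightarrow> Mring" where
  "constM c = Poly_Mapping.single 0 c"

text \<open>The indeterminate m_alpha, with m_0 := 1.\<close>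
definition mvar :: "mindex \<Rightarrow> Mring" where
  "mvar \<alpha> = (if \<alpha> = 0 then 1 else Poly_Mapping.single (Poly_Mapping.single \<alpha> 1) 1)"

text \<open>The variable x_{j+1} in M[x].\<close>
definition xvar :: "nat \<Rightarrow> Mxring" where
  "xvar j = Poly_Mapping.single (Poly_Mapping.single j 1) 1"

definition Mcarrier :: "nat \<Rightarrow> Mring set" where
  "Mcarrier n = {p::Mring. \<forall>\<nu>\<in>Poly_Mapping.keys p. \<forall>\<alpha>\<in>Poly_Mapping.keys \<nu>. \<alpha> \<noteq> 0 \<and> Poly_Mapping.keys \<alpha> \<subseteq> {..<n}}"

definition Mxcarrier :: "nat \<Rightarrow> Mxring set" where
  "Mxcarrier n = {f::Mxring. \<forall>\<beta>\<in>Poly_Mapping.keys f. Poly_Mapping.keys \<beta> \<subseteq> {..<n} \<and> Poly_Mapping.lookup f \<beta> \<in> Mcarrier n}"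

text \<open>The M-linear map m : M[x] \<rightarrow> M with m(x^alpha) = m_alpha.\<close>
definition Lm :: "Mxring \<Rightarrow> Mring" where
  "Lm f = (\<Sum>\<beta>\<in>Poly_Mapping.keys f. Poly_Mapping.lookup f \<beta> * mvar \<beta>)"

text \<open>qm(\<emptyset>,\<emptyset>) in M (for n variables): the quadratic module generated by the m(f^2).\<close>
inductive_set qm0 :: "nat \<Rightarrow> Mring set" for n :: nat where
  one: "1 \<in> qm0 n"
| gen: "f \<in> Mxcarrier n \<Longrightarrow> Lm (f * f) \<in> qm0 n"
| add: "a \<in> qm0 n \<Longrightarrow> b \<in> qm0 n \<Longrightarrow> a + b \<in> qm0 n"
| sqmult: "a \<in> qm0 n \<Longrightarrow> g \<in> Mcarrier n \<Longrightarrow> g * g * a \<in> qm0 n"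

end

theory Submission
  imports Defs
begin

lemma Lm_sum:
  assumes "finite S" "Poly_Mapping.keys f \<subseteq> S"
  shows "Lm f = (\<Sum>\<beta>\<in>S. Poly_Mapping.lookup f \<beta> * mvar \<beta>)"
  unfolding Lm_def
  by (rule sum.mono_neutral_left) (use assms in \<open>auto simp: in_keys_iff\<close>)

lemma Lm_add: "Lm (f + g) = Lm f + Lm g"
proof -
  let ?S = "Poly_Mapping.keys f \<union> Poly_Mapping.keys g"
  have "Lm (f + g) = (\<Sum>\<beta>\<in>?S. Poly_Mapping.lookup (f+g) \<beta> * mvar \<beta>)"
    by (rule Lm_sum) (use keys_add[of f g] in auto)
  also have "\<dots> = (\<Sum>\<beta>\<in>?S. Poly_Mapping.lookup f \<beta> * mvar \<beta>) + (\<Sum>\<beta>\<in>?S. Poly_Mapping.lookup g \<beta> * mvar \<beta>)"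
    by (simp add: lookup_add distrib_right sum.distrib)
  also have "\<dots> = Lm f + Lm g"
    by (simp add: Lm_sum[symmetric])
  finally show ?thesis .
qed

lemma Lm_uminus: "Lm (- f) = - Lm f"
  unfolding Lm_def by (simp add: sum_negf)

lemma Lm_diff: "Lm (f - g) = Lm f - Lm g"
  using Lm_add[of f "-g"] by (simp add: Lm_uminus)

lemma Lm_single: "Lm (Poly_Mapping.single \<beta> a) = a * mvar \<beta>"
  by (subst Lm_sum[of "{\<beta>}"]) auto

lemma constM_mult: "constM a * constM b = constM (a * b)"
  unfolding constM_def by (simp add: mult_single)

lemma constM_add: "constM a + constM b = constM (a + b)"
  unfolding constM_def by (simp add: single_add)

lemma constM_one: "constM 1 = 1"
  unfolding constM_def by simp

lemma Mcarrier_zero: "0 \<in> Mcarrier n"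
  unfolding Mcarrier_def by simp

lemma Mcarrier_constM: "constM c \<in> Mcarrier n"
  unfolding Mcarrier_def constM_def by simp

lemma Mcarrier_one: "1 \<in> Mcarrier n"
  using Mcarrier_constM[of 1 n] by (simp add: constM_one)

lemma Mcarrier_uminus: "p \<in> Mcarrier n \<Longrightarrow> - p \<in> Mcarrier n"
  unfolding Mcarrier_def by simp

lemma Mcarrier_mvar: "Poly_Mapping.keys \<alpha> \<subseteq> {..<n} \<Longrightarrow> mvar \<alpha> \<in> Mcarrier n"
  unfolding Mcarrier_def mvar_def by auto

lemma qm0_zero: "0 \<in> qm0 n"
  using qm0.sqmult[OF qm0.one Mcarrier_zero] by simp

lemma Mxcarrier_two:
  assumes "Poly_Mapping.keys \<beta> \<subseteq> {..<n}" "Poly_Mapping.keys \<gamma> \<subseteq> {..<n}" "\<beta> \<noteq> \<gamma>"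
    "a \<in> Mcarrier n" "b \<in> Mcarrier n"
  shows "Poly_Mapping.single \<beta> a - Poly_Mapping.single \<gamma> b \<in> Mxcarrier n"
proof -
  have k: "Poly_Mapping.keys (Poly_Mapping.single \<beta> a - Poly_Mapping.single \<gamma> b) \<subseteq> {\<beta>, \<gamma>}"
    using keys_diff[of "Poly_Mapping.single \<beta> a" "Poly_Mapping.single \<gamma> b"] by (auto split: if_splits)
  show ?thesis unfolding Mxcarrier_def
  proof (intro CollectI ballI conjI)
    fix \<delta> assume d: "\<delta> \<in> Poly_Mapping.keys (Poly_Mapping.single \<beta> a - Poly_Mapping.single \<gamma> b)"
    have bg: "\<delta> = \<beta> \<or> \<delta> = \<gamma>" using k d by auto
    then show "Poly_Mapping.keys \<delta> \<subseteq> {..<n}" using assms by auto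
    show "Poly_Mapping.lookup (Poly_Mapping.single \<beta> a - Poly_Mapping.single \<gamma> b) \<delta> \<in> Mcarrier n"
      using bg assms
      by (auto simp: lookup_minus lookup_single_not_eq Mcarrier_uminus)
  qed
qed

lemma mvar_zero: "mvar 0 = 1"
  unfolding mvar_def by simp

lemma stepA:
  assumes "Poly_Mapping.keys \<alpha> \<subseteq> {..<n}"
  shows "mvar (\<alpha> + \<alpha>) - mvar \<alpha> ^ 2 \<in> qm0 n"
proof (cases "\<alpha> = 0")
  case True
  then show ?thesis using qm0_zero by (simp add: mvar_zero)
next
  case False
  define f :: Mxring where "f = Poly_Mapping.single \<alpha> 1 - Poly_Mapping.single 0 (mvar \<alpha>)"
  have fc: "f \<in> Mxcarrier n" unfolding f_def
    by (rule Mxcarrier_two) (use assms False in \<open>auto simp: Mcarrier_mvar Mcarrier_one\<close>)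
  have ff: "f * f = Poly_Mapping.single (\<alpha>+\<alpha>) 1 - Poly_Mapping.single \<alpha> (mvar \<alpha>)
      - Poly_Mapping.single \<alpha> (mvar \<alpha>) + Poly_Mapping.single 0 (mvar \<alpha> * mvar \<alpha>)"
    unfolding f_def by (simp add: algebra_simps mult_single)
  have "Lm (f * f) = mvar (\<alpha> + \<alpha>) - mvar \<alpha> ^ 2"
    unfolding ff by (simp only: Lm_add Lm_diff Lm_single) (simp add: mvar_zero power2_eq_square)
  then show ?thesis using qm0.gen[OF fc] by simp
qed

lemma qm_scale:
  assumes "a \<in> qm0 n" "c \<ge> 0"
  shows "constM c * a \<in> qm0 n"
proof -
  have "constM (sqrt c) * constM (sqrt c) = constM c"
    using assms(2) by (simp add: constM_mult)
  then show ?thesis using qm0.sqmult[OF assms(1) Mcarrier_constM[of "sqrt c" n]] by simp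
qed

lemma half_half: "constM (1/2) + constM (1/2) = 1"
  by (simp add: constM_add constM_one)

lemma stepB:
  assumes "Poly_Mapping.keys \<beta> \<subseteq> {..<n}" "Poly_Mapping.keys \<gamma> \<subseteq> {..<n}"
  shows "constM (1/2) * (mvar (\<beta> + \<beta>) + mvar (\<gamma> + \<gamma>)) - mvar (\<beta> + \<gamma>) \<in> qm0 n"
proof (cases "\<beta> = \<gamma>")
  case True
  have "constM (1/2) * (mvar (\<beta> + \<beta>) + mvar (\<beta> + \<beta>)) = (constM (1/2) + constM (1/2)) * mvar (\<beta> + \<beta>)"
    by (simp add: algebra_simps)
  then have "constM (1/2) * (mvar (\<beta> + \<beta>) + mvar (\<beta> + \<beta>)) - mvar (\<beta> + \<beta>) = 0"
    by (simp only: half_half) simp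
  then show ?thesis using True qm0_zero by metis
next
  case False
  define f :: Mxring where "f = Poly_Mapping.single \<beta> 1 - Poly_Mapping.single \<gamma> 1"
  have fc: "f \<in> Mxcarrier n" unfolding f_def
    by (rule Mxcarrier_two) (use assms False in \<open>auto simp: Mcarrier_one\<close>)
  have ff: "f * f = Poly_Mapping.single (\<beta>+\<beta>) 1 - Poly_Mapping.single (\<beta>+\<gamma>) 1
      - Poly_Mapping.single (\<beta>+\<gamma>) 1 + Poly_Mapping.single (\<gamma>+\<gamma>) 1"
    unfolding f_def by (simp add: algebra_simps mult_single add.commute)
  have L: "Lm (f * f) = mvar (\<beta>+\<beta>) - mvar (\<beta>+\<gamma>) - mvar (\<beta>+\<gamma>) + mvar (\<gamma>+\<gamma>)"
    unfolding ff by (simp only: Lm_add Lm_diff Lm_single) simp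
  have "constM (1/2) * Lm (f * f) = constM (1/2) * (mvar (\<beta> + \<beta>) + mvar (\<gamma> + \<gamma>))
        - (constM (1/2) + constM (1/2)) * mvar (\<beta> + \<gamma>)"
    unfolding L by (simp add: algebra_simps)
  also have "\<dots> = constM (1/2) * (mvar (\<beta> + \<beta>) + mvar (\<gamma> + \<gamma>)) - mvar (\<beta> + \<gamma>)"
    by (simp add: half_half)
  finally show ?thesis using qm_scale[OF qm0.gen[OF fc], of "1/2"] by simp
qed

lemma xvar_pow: "xvar j ^ k = Poly_Mapping.single (Poly_Mapping.single j k) 1"
proof (induction k)
  case 0
  then show ?case by simp
next
  case (Suc k)
  have "xvar j ^ Suc k = xvar j * xvar j ^ k" by simp
  also have "\<dots> = Poly_Mapping.single (Poly_Mapping.single j 1 + Poly_Mapping.single j k) 1"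
    by (simp only: Suc) (simp add: xvar_def mult_single)
  also have "\<dots> = Poly_Mapping.single (Poly_Mapping.single j (Suc k)) 1"
    by (simp add: single_add[symmetric])
  finally show ?case .
qed

lemma Lm_xvar_pow: "Lm (xvar j ^ k) = mvar (Poly_Mapping.single j k)"
  by (simp add: xvar_pow Lm_single)

definition dl :: "nat \<Rightarrow> mindex \<Rightarrow> nat \<Rightarrow> mindex" where
  "dl n i k = (\<Sum>c\<in>{k..<n}. Poly_Mapping.single c (2^k * Poly_Mapping.lookup i c))"

lemma lookup_dl: "Poly_Mapping.lookup (dl n i k) d = (if k \<le> d \<and> d < n then 2^k * Poly_Mapping.lookup i d else 0)"
proof -
  have "Poly_Mapping.lookup (dl n i k) d = (\<Sum>c\<in>{k..<n}. if c = d then 2^k * Poly_Mapping.lookup i d else 0)"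
    unfolding dl_def lookup_sum by (intro sum.cong) (auto simp: lookup_single)
  also have "\<dots> = (if k \<le> d \<and> d < n then 2^k * Poly_Mapping.lookup i d else 0)"
    by (simp add: sum.delta')
  finally show ?thesis .
qed

lemma dl_keys: "Poly_Mapping.keys (dl n i k) \<subseteq> {..<n}"
  by (auto simp: in_keys_iff lookup_dl split: if_splits)

lemma dl_zero:
  assumes "Poly_Mapping.keys i \<subseteq> {..<n}"
  shows "dl n i 0 = i"
proof (rule poly_mapping_eqI)
  fix d show "Poly_Mapping.lookup (dl n i 0) d = Poly_Mapping.lookup i d"
    using assms by (auto simp: lookup_dl in_keys_iff)
qed

lemma dl_double:
  assumes "k < n"
  shows "dl n i k + dl n i k = Poly_Mapping.single k (2^(k+1) * Poly_Mapping.lookup i k) + dl n i (k+1)"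
proof (rule poly_mapping_eqI)
  fix d show "Poly_Mapping.lookup (dl n i k + dl n i k) d = Poly_Mapping.lookup (Poly_Mapping.single k (2^(k+1) * Poly_Mapping.lookup i k) + dl n i (k+1)) d"
    using assms by (auto simp: lookup_add lookup_dl lookup_single when_def)
qed

lemma dl_last:
  assumes "n \<ge> 1"
  shows "dl n i (n-1) + dl n i (n-1) = Poly_Mapping.single (n-1) (2^n * Poly_Mapping.lookup i (n-1))"
proof (rule poly_mapping_eqI)
  fix d show "Poly_Mapping.lookup (dl n i (n-1) + dl n i (n-1)) d = Poly_Mapping.lookup (Poly_Mapping.single (n-1) (2^n * Poly_Mapping.lookup i (n-1))) d"
    using assms by (cases n) (auto simp: lookup_add lookup_dl lookup_single when_def)
qed

lemma single_double: "Poly_Mapping.single k (a::nat) + Poly_Mapping.single k a = Poly_Mapping.single k (2*a)"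
  by (simp add: single_add[symmetric] mult_2)

lemma chain:
  assumes ki: "Poly_Mapping.keys i \<subseteq> {..<n}"
  shows "k < n \<Longrightarrow> (\<Sum>c<k. constM (1/2^(c+1)) * mvar (Poly_Mapping.single c (2^(c+2) * Poly_Mapping.lookup i c)))
     + constM (1/2^k) * mvar (dl n i k + dl n i k) - mvar i ^ 2 \<in> qm0 n"
proof (induction k)
  case 0
  then show ?case using stepA[OF ki] by (simp add: constM_one dl_zero[OF ki])
next
  case (Suc k)
  then have kn: "k < n" by simp
  define B where "B = Poly_Mapping.single k (2^(k+1) * Poly_Mapping.lookup i k)"
  define D where "D = dl n i (k+1)"
  have BB: "B + B = Poly_Mapping.single k (2^(k+2) * Poly_Mapping.lookup i k)"
    unfolding B_def single_double by (simp add: mult.assoc)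
  have Bk: "Poly_Mapping.keys B \<subseteq> {..<n}" unfolding B_def using kn by simp
  have Dk: "Poly_Mapping.keys D \<subseteq> {..<n}" unfolding D_def by (rule dl_keys)
  have dd: "dl n i k + dl n i k = B + D" unfolding B_def D_def by (rule dl_double[OF kn])
  have cc: "constM (1/2^k) * constM (1/2) = constM (1/2^(Suc k))" by (simp add: constM_mult mult.commute)
  define S where "S = constM (1/2) * (mvar (B + B) + mvar (D + D)) - mvar (B + D)"
  have S: "constM (1/2^k) * S \<in> qm0 n"
    unfolding S_def by (rule qm_scale[OF stepB[OF Bk Dk]]) simp
  have IH: "(\<Sum>c<k. constM (1/2^(c+1)) * mvar (Poly_Mapping.single c (2^(c+2) * Poly_Mapping.lookup i c)))
     + constM (1/2^k) * mvar (B + D) - mvar i ^ 2 \<in> qm0 n"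
    using Suc.IH[OF kn] by (simp add: dd)
  have E: "(\<Sum>c<Suc k. constM (1/2^(c+1)) * mvar (Poly_Mapping.single c (2^(c+2) * Poly_Mapping.lookup i c)))
     + constM (1/2^Suc k) * mvar (D + D) - mvar i ^ 2
     = ((\<Sum>c<k. constM (1/2^(c+1)) * mvar (Poly_Mapping.single c (2^(c+2) * Poly_Mapping.lookup i c)))
     + constM (1/2^k) * mvar (B + D) - mvar i ^ 2) + constM (1/2^k) * S"
    unfolding S_def sum.lessThan_Suc BB[symmetric] cc[symmetric] Suc_eq_plus1[symmetric] add_2_eq_Suc'[symmetric]
    by (simp only: algebra_simps)
  have "(\<Sum>c<Suc k. constM (1/2^(c+1)) * mvar (Poly_Mapping.single c (2^(c+2) * Poly_Mapping.lookup i c)))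
     + constM (1/2^Suc k) * mvar (D + D) - mvar i ^ 2 \<in> qm0 n"
    unfolding E by (rule qm0.add[OF IH S])
  then show ?case by (simp only: D_def Suc_eq_plus1)
qed

theorem lemma6p4:
  fixes n :: nat and i :: mindex
  assumes "n \<ge> 1" and "Poly_Mapping.keys i \<subseteq> {..<n}"
  shows "(\<Sum>j=1..n-1. constM (1 / 2 ^ j) * Lm (xvar (j - 1) ^ (2 ^ (j + 1) * Poly_Mapping.lookup i (j - 1))))
           + constM (1 / 2 ^ (n - 1)) * Lm (xvar (n - 1) ^ (2 ^ n * Poly_Mapping.lookup i (n - 1)))
           - mvar i ^ 2 \<in> qm0 n"
proof -
  have set: "{1..n-1} = Suc ` {..<n-1}"
    by (simp add: image_Suc_lessThan)
  have E1: "(\<Sum>j=1..n-1. constM (1 / 2 ^ j) * Lm (xvar (j - 1) ^ (2 ^ (j + 1) * Poly_Mapping.lookup i (j - 1))))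
      = (\<Sum>c<n-1. constM (1/2^(c+1)) * mvar (Poly_Mapping.single c (2^(c+2) * Poly_Mapping.lookup i c)))"
    unfolding set by (subst sum.reindex) (auto simp: Lm_xvar_pow)
  have E2: "Lm (xvar (n - 1) ^ (2 ^ n * Poly_Mapping.lookup i (n - 1))) = mvar (dl n i (n-1) + dl n i (n-1))"
    by (simp only: Lm_xvar_pow dl_last[OF assms(1)])
  have "n - 1 < n" using assms(1) by simp
  note C = chain[OF assms(2) this]
  show ?thesis unfolding E1 E2 by (rule C)
qed

end
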